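(* Let $\Phi(x,y)$ be a standard symmetric polynomial of partial degree $d$ and let $H$ be a finite, connected, $d$-regular graph that is strongly $\Phi$-polynomial. Then $G(\Phi)^*$ is vertex-transitive. In particular, $H$ is vertex-transitive.
   Context: For symmetric $\Phi(x,y)\in\mathbb{C}[x,y]$ of partial degree $d$ (degree $d$ in $y$), $G(\Phi)$ has vertex set $\mathbb{C}$, the neighbours of $u$ being the roots of $\Phi(u,y)$ (edges = points of $\mathbb{V}(\Phi)$). A component is singular if it contains a loop ($\Phi(u,u)=0$), a multiple edge (multiple root of $\Phi(u,y)$) or a defective vertex (leading coefficient in $y$ of $\Phi(u,y)$ vanishes). $\Phi$ is standard if it is squarefree, $\Phi(x,x)\not\equiv 0$, and $\Phi$ has no nonconstant factor depending only on $x$ (or only on $y$); $G(\Phi)^*$ is $G(\Phi)$ with its finitely many singular components removed. $H$ is $\Phi$-polynomial if it is isomorphic to some component of $G(\Phi)^*$, and strongly $\Phi$-polynomial if it is isomorphic to every component of $G(\Phi)^*$. *)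

theory Defs
  imports "HOL-Computational_Algebra.Computational_Algebra"
begin

text \<open>A bivariate polynomial Phi(x,y) in C[x,y] is represented as a polynomial in y
whose coefficients are polynomials in x, i.e. of type complex poly poly.\<close>

definition fiber :: "complex poly poly \<Rightarrow> complex \<Rightarrow> complex poly" where
  "fiber Phi u = map_poly (\<lambda>c. poly c u) Phi"

definition evalb :: "complex poly poly \<Rightarrow> complex \<Rightarrow> complex \<Rightarrow> complex" where
  "evalb Phi u v = poly (fiber Phi u) v"

definition symmetric_bipoly :: "complex poly poly \<Rightarrow> bool" where
  "symmetric_bipoly Phi \<longleftrightarrow> (\<forall>u v. evalb Phi u v = evalb Phi v u)"

definition partial_degree :: "complex poly poly \<Rightarrow> nat" where
  "partial_degree Phi = degree Phi"

definition standard :: "complex poly poly \<Rightarrow> bool" where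
  "standard Phi \<longleftrightarrow>
     squarefree Phi \<and>
     (\<exists>u. evalb Phi u u \<noteq> 0) \<and>
     (\<forall>p :: complex poly. [:p:] dvd Phi \<longrightarrow> degree p = 0) \<and>
     (\<forall>q :: complex poly. map_poly (\<lambda>c. [:c:]) q dvd Phi \<longrightarrow> degree q = 0)"

definition phi_adj :: "complex poly poly \<Rightarrow> complex \<Rightarrow> complex \<Rightarrow> bool" where
  "phi_adj Phi u v \<longleftrightarrow> evalb Phi u v = 0"

definition component :: "complex poly poly \<Rightarrow> complex \<Rightarrow> complex set" where
  "component Phi u = {v. (phi_adj Phi)\<^sup>*\<^sup>* u v}"

text \<open>Singular vertex: loop, multiple edge (multiple root of Phi(u,y)), or defective
(leading coefficient in y vanishes at u).\<close>
definition singular_vertex :: "complex poly poly \<Rightarrow> complex \<Rightarrow> bool" where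
  "singular_vertex Phi u \<longleftrightarrow>
     evalb Phi u u = 0 \<or>
     (fiber Phi u \<noteq> 0 \<and> (\<exists>v. order v (fiber Phi u) \<ge> 2)) \<or>
     poly (lead_coeff Phi) u = 0"

definition Gstar_components :: "complex poly poly \<Rightarrow> complex set set" where
  "Gstar_components Phi =
     {C. C \<in> range (component Phi) \<and> \<not> (\<exists>u\<in>C. singular_vertex Phi u)}"

definition Gstar_verts :: "complex poly poly \<Rightarrow> complex set" where
  "Gstar_verts Phi = \<Union> (Gstar_components Phi)"

definition graph_iso :: "'a set \<Rightarrow> ('a \<Rightarrow> 'a \<Rightarrow> bool) \<Rightarrow> 'b set \<Rightarrow> ('b \<Rightarrow> 'b \<Rightarrow> bool) \<Rightarrow> bool" where
  "graph_iso V E W F \<longleftrightarrow>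
     (\<exists>f. bij_betw f V W \<and> (\<forall>x\<in>V. \<forall>y\<in>V. E x y \<longleftrightarrow> F (f x) (f y)))"

definition vertex_transitive :: "'a set \<Rightarrow> ('a \<Rightarrow> 'a \<Rightarrow> bool) \<Rightarrow> bool" where
  "vertex_transitive V E \<longleftrightarrow>
     (\<forall>u\<in>V. \<forall>v\<in>V. \<exists>f. bij_betw f V V \<and>
        (\<forall>x\<in>V. \<forall>y\<in>V. E x y \<longleftrightarrow> E (f x) (f y)) \<and> f u = v)"

definition finite_simple_graph :: "'a set \<Rightarrow> ('a \<Rightarrow> 'a \<Rightarrow> bool) \<Rightarrow> bool" where
  "finite_simple_graph V E \<longleftrightarrow> finite V \<and>
     (\<forall>x\<in>V. \<forall>y\<in>V. E x y \<longleftrightarrow> E y x) \<and> (\<forall>x\<in>V. \<not> E x x)"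

definition connected_graph :: "'a set \<Rightarrow> ('a \<Rightarrow> 'a \<Rightarrow> bool) \<Rightarrow> bool" where
  "connected_graph V E \<longleftrightarrow> V \<noteq> {} \<and>
     (\<forall>x\<in>V. \<forall>y\<in>V. (\<lambda>a b. a \<in> V \<and> b \<in> V \<and> E a b)\<^sup>*\<^sup>* x y)"

definition regular_graph :: "'a set \<Rightarrow> ('a \<Rightarrow> 'a \<Rightarrow> bool) \<Rightarrow> nat \<Rightarrow> bool" where
  "regular_graph V E d \<longleftrightarrow> (\<forall>x\<in>V. card {y\<in>V. E x y} = d)"

definition strongly_phi_polynomial ::
  "complex poly poly \<Rightarrow> 'a set \<Rightarrow> ('a \<Rightarrow> 'a \<Rightarrow> bool) \<Rightarrow> bool" where
  "strongly_phi_polynomial Phi V E \<longleftrightarrow>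
     (\<forall>C\<in>Gstar_components Phi. graph_iso V E C (phi_adj Phi))"

end

theory Submission
  imports Defs "Subresultants.Subresultant_Gcd" "HOL-Analysis.Analysis" "HOL-Computational_Algebra.Field_as_Ring"
begin

lemma prime_factor_pos_degree:
  fixes g :: "complex poly poly"
  shows "g \<noteq> 0 \<Longrightarrow> degree g \<noteq> 0 \<Longrightarrow> \<exists>q. prime q \<and> q dvd g \<and> degree q \<noteq> 0"
proof (induction g rule: prime_divisors_induct)
  case zero then show ?case by simp
next
  case (unit x) then show ?case by (simp add: poly_dvd_1)
next
  case (factor p x)
  then have "x \<noteq> 0" "p \<noteq> 0" by auto
  then have "degree (p * x) = degree p + degree x" by (simp add: degree_mult_eq)
  show ?case
  proof (cases "degree p = 0")
    case True
    with factor \<open>degree (p*x) = _\<close> \<open>x \<noteq> 0\<close> obtain q where "prime q" "q dvd x" "degree q \<noteq> 0" by auto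
    then show ?thesis by (intro exI[of _ q]) auto
  next
    case False then show ?thesis using factor by auto
  qed
qed

lemma squarefree_resultant_nonzero:
  fixes Phi :: "complex poly poly"
  assumes sf: "squarefree Phi"
  shows "resultant Phi (pderiv Phi) \<noteq> 0"
proof
  assume "resultant Phi (pderiv Phi) = 0"
  then have dg: "degree (gcd Phi (pderiv Phi)) \<noteq> 0" by (simp add: resultant_0_gcd)
  have "Phi \<noteq> 0" using sf by auto
  then have "gcd Phi (pderiv Phi) \<noteq> 0" by simp
  from prime_factor_pos_degree[OF this dg] obtain q where q: "prime q" "q dvd gcd Phi (pderiv Phi)" "degree q \<noteq> 0" by blast
  then have "q dvd Phi" "q dvd pderiv Phi" by auto
  then obtain s where s: "Phi = q * s" by (auto elim: dvdE)
  have "pderiv Phi = q * pderiv s + s * pderiv q" using s by (simp add: pderiv_mult)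
  with \<open>q dvd pderiv Phi\<close> have "q dvd s * pderiv q"
    by (metis dvd_add_right_iff dvd_triv_left)
  with q(1) have "q dvd s \<or> q dvd pderiv q" using prime_dvd_mult_iff by blast
  moreover have "\<not> q dvd pderiv q" using q(3) by simp
  ultimately have "q dvd s" by blast
  then have "q * q dvd Phi" unfolding s by (rule mult_dvd_mono[OF dvd_refl])
  with sf have "is_unit q" by (metis power2_eq_square squarefreeD)
  with q(1) show False by simp
qed

lemma fiber_coeff: "coeff (fiber Phi u) i = poly (coeff Phi i) u"
  by (simp add: fiber_def coeff_map_poly)

lemma fiber_pderiv: "fiber (pderiv Phi) u = pderiv (fiber Phi u)"
  by (rule poly_eqI) (simp add: fiber_coeff coeff_pderiv)

lemma degree_fiber: "poly (lead_coeff Phi) u \<noteq> 0 \<Longrightarrow> degree (fiber Phi u) = degree Phi"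
  by (metis coeff_map_poly degree_map_poly_le fiber_def le_antisym le_degree poly_0)

lemma lead_coeff_fiber: "poly (lead_coeff Phi) u \<noteq> 0 \<Longrightarrow> lead_coeff (fiber Phi u) = poly (lead_coeff Phi) u"
  by (simp add: degree_fiber fiber_coeff)

lemma evalb_sum: "evalb Phi x y = (\<Sum>i\<le>degree Phi. poly (coeff Phi i) x * y ^ i)"
proof -
  have "evalb Phi x y = (\<Sum>i\<le>degree (fiber Phi x). coeff (fiber Phi x) i * y ^ i)"
    by (simp add: evalb_def poly_altdef)
  also have "\<dots> = (\<Sum>i\<le>degree Phi. coeff (fiber Phi x) i * y ^ i)"
  proof (rule sum.mono_neutral_left)
    show "{..degree (fiber Phi x)} \<subseteq> {..degree Phi}"
      by (auto simp: fiber_def intro: le_trans[OF _ degree_map_poly_le])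
  next
    show "\<forall>i\<in>{..degree Phi} - {..degree (fiber Phi x)}. coeff (fiber Phi x) i * y ^ i = 0"
      by (auto simp: coeff_eq_0)
  qed auto
  finally show ?thesis by (simp add: fiber_coeff)
qed

lemma multiple_root_resultant:
  fixes Phi :: "complex poly poly"
  assumes lc: "poly (lead_coeff Phi) u \<noteq> 0" and o: "order v (fiber Phi u) \<ge> 2"
    and nz: "fiber Phi u \<noteq> 0"
  shows "poly (resultant Phi (pderiv Phi)) u = 0"
proof -
  let ?f = "fiber Phi u"
  have d1: "degree Phi \<noteq> 0"
    using order_degree[OF nz, of v] o degree_fiber[OF lc] by simp
  have deg1: "degree (map_poly (\<lambda>p. poly p u) Phi) = degree Phi"
    using degree_fiber[OF lc] by (simp add: fiber_def)
  have "coeff (pderiv Phi) (degree Phi - 1) = of_nat (degree Phi) * lead_coeff Phi"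
    using d1 by (simp add: coeff_pderiv)
  then have lc2: "poly (lead_coeff (pderiv Phi)) u \<noteq> 0"
    using d1 lc by (simp add: degree_pderiv)
  have deg2: "degree (map_poly (\<lambda>p. poly p u) (pderiv Phi)) = degree (pderiv Phi)"
    using degree_fiber[OF lc2] by (simp add: fiber_def)
  have res: "resultant ?f (pderiv ?f) = poly (resultant Phi (pderiv Phi)) u"
    using poly_hom.resultant_map_poly[OF deg1 deg2] fiber_pderiv[of Phi u]
    unfolding fiber_def by metis
  have "[:-v,1:]^2 dvd ?f" using order_divides[of v 2 "fiber Phi u"] o by simp
  then obtain q where q: "?f = [:-v,1:]^2 * q" by (auto elim: dvdE)
  have d2: "[:-v,1:] dvd pderiv ?f"
    unfolding q power2_eq_square mult.assoc pderiv_mult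
    by (intro dvd_add dvd_mult2 dvd_refl)
  have d3: "[:-v,1:] dvd ?f" unfolding q power2_eq_square mult.assoc by (rule dvd_triv_left)
  have "[:-v,1:] dvd gcd ?f (pderiv ?f)" using d2 d3 by simp
  moreover have "gcd ?f (pderiv ?f) \<noteq> 0" using nz by simp
  ultimately have "degree [:-v,1::complex:] \<le> degree (gcd ?f (pderiv ?f))"
    by (rule dvd_imp_degree_le)
  then have "degree (gcd ?f (pderiv ?f)) \<noteq> 0" by (simp only: degree_pCons_eq_if) simp
  then have "resultant ?f (pderiv ?f) = 0" using resultant_0_gcd by blast
  with res show ?thesis by argo
qed

lemma poly_lower_bound:
  fixes p :: "complex poly"
  assumes "p \<noteq> 0" "\<And>r. poly p r = 0 \<Longrightarrow> dist r b \<ge> e" "e \<ge> 0"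
  shows "norm (poly p b) \<ge> norm (lead_coeff p) * e ^ degree p"
  using assms
proof (induction "degree p" arbitrary: p)
  case 0
  then obtain c where "p = [:c:]" by (metis degree_eq_zeroE)
  then show ?case by simp
next
  case (Suc n)
  then have "\<not> constant (poly p)" by (simp add: constant_degree)
  then obtain r where r: "poly p r = 0" using fundamental_theorem_of_algebra by blast
  then obtain q where q: "p = [:-r,1:] * q" by (auto simp: poly_eq_0_iff_dvd elim: dvdE)
  have qnz: "q \<noteq> 0" using Suc.prems(1) q by auto
  have "degree p = degree [:-r,1:] + degree q" unfolding q by (rule degree_mult_eq) (use qnz in auto)
  then have dq: "degree q = n" using Suc.hyps(2) by simp
  have lq: "lead_coeff p = lead_coeff q" unfolding q lead_coeff_mult by simp
  have roots: "\<And>s. poly q s = 0 \<Longrightarrow> dist s b \<ge> e" using Suc.prems(2) q by auto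
  have IH: "norm (poly q b) \<ge> norm (lead_coeff q) * e ^ n"
    using Suc.hyps(1)[of q] dq qnz roots Suc.prems(3) by simp
  have "poly p b = poly [:-r,1:] b * poly q b" unfolding q by (rule poly_mult)
  then have "poly p b = (b - r) * poly q b" by simp
  then have "norm (poly p b) = norm (b - r) * norm (poly q b)" by (simp add: norm_mult)
  also have "norm (b - r) = dist r b" by (simp add: dist_norm norm_minus_commute)
  finally have eq: "norm (poly p b) = dist r b * norm (poly q b)" .
  have "dist r b \<ge> e" using Suc.prems(2) r by blast
  then have "dist r b * norm (poly q b) \<ge> e * (norm (lead_coeff q) * e ^ n)"
    using IH Suc.prems(3) by (intro mult_mono) auto
  moreover have "e ^ degree p = e * e ^ n" using Suc.hyps(2) by (metis power_Suc)
  ultimately show ?case using eq lq by (simp add: algebra_simps)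
qed

lemma evalb_tendsto_x: "((\<lambda>x. evalb Phi x b) \<longlongrightarrow> evalb Phi a b) F" if "((\<lambda>x. x) \<longlongrightarrow> a) F"
  unfolding evalb_sum by (intro tendsto_intros that)

lemma evalb_tendsto_xy:
  "((\<lambda>z. evalb Phi (fst z) (snd z)) \<longlongrightarrow> evalb Phi a b) (nhds (a, b))"
proof -
  have f: "((\<lambda>z. fst z) \<longlongrightarrow> a) (nhds (a, b))" "((\<lambda>z. snd z) \<longlongrightarrow> b) (nhds (a, b))"
    using tendsto_fst[OF filterlim_ident, of "(a,b)"] tendsto_snd[OF filterlim_ident, of "(a,b)"] by auto
  show ?thesis unfolding evalb_sum by (intro tendsto_intros f)
qed

lemma nonedge_stable:
  assumes "evalb Phi a b \<noteq> 0"
  shows "\<exists>e>0. \<forall>x y. dist x a < e \<longrightarrow> dist y b < e \<longrightarrow> evalb Phi x y \<noteq> 0"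
proof -
  have "eventually (\<lambda>z. evalb Phi (fst z) (snd z) \<noteq> 0) (nhds (a, b))"
    by (rule tendsto_imp_eventually_ne[OF evalb_tendsto_xy assms])
  then obtain e where e: "e > 0" "\<And>z. dist z (a, b) < e \<Longrightarrow> evalb Phi (fst z) (snd z) \<noteq> 0"
    unfolding eventually_nhds_metric by blast
  show ?thesis
  proof (intro exI[of _ "e/2"] conjI allI impI)
    fix x y assume "dist x a < e/2" "dist y b < e/2"
    then have "dist (x, y) (a, b) < e"
      using dist_Pair_Pair[of x y a b] sqrt_sum_squares_le_sum[of "dist x a" "dist y b"] by simp
    then show "evalb Phi x y \<noteq> 0" using e(2)[of "(x,y)"] by simp
  qed (use e in auto)
qed

lemma root_cont:
  fixes Phi :: "complex poly poly"
  assumes lc: "poly (lead_coeff Phi) a \<noteq> 0" and ev: "evalb Phi a b = 0" and ep: "e > 0"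
  shows "eventually (\<lambda>a'. \<exists>r. evalb Phi a' r = 0 \<and> dist r b < e) (nhds a)"
proof -
  define c where "c = norm (poly (lead_coeff Phi) a) / 2"
  have c: "c > 0" using lc by (simp add: c_def)
  have "((\<lambda>x. norm (poly (lead_coeff Phi) x)) \<longlongrightarrow> norm (poly (lead_coeff Phi) a)) (nhds a)"
    by (intro tendsto_intros filterlim_ident)
  then have ev1: "eventually (\<lambda>x. norm (poly (lead_coeff Phi) x) > c) (nhds a)"
    by (rule order_tendstoD) (use c in \<open>simp add: c_def\<close>)
  have "((\<lambda>x. norm (evalb Phi x b)) \<longlongrightarrow> 0) (nhds a)"
    using tendsto_norm[OF evalb_tendsto_x[OF filterlim_ident, of Phi b a]] ev by simp
  then have ev2: "eventually (\<lambda>x. norm (evalb Phi x b) < c * e ^ degree Phi) (nhds a)"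
    by (rule order_tendstoD) (use c ep in simp)
  show ?thesis
    using ev1 ev2
  proof (eventually_elim)
    case (elim x)
    show ?case
    proof (rule ccontr)
      assume "\<not> (\<exists>r. evalb Phi x r = 0 \<and> dist r b < e)"
      then have far: "\<And>r. poly (fiber Phi x) r = 0 \<Longrightarrow> dist r b \<ge> e"
        by (force simp: evalb_def)
      have lcx: "poly (lead_coeff Phi) x \<noteq> 0" using elim c by auto
      have nz: "fiber Phi x \<noteq> 0"
        using lead_coeff_fiber[OF lcx] lcx by auto
      have "norm (poly (fiber Phi x) b) \<ge> norm (lead_coeff (fiber Phi x)) * e ^ degree (fiber Phi x)"
        using poly_lower_bound[OF nz far] ep by simp
      then have "norm (evalb Phi x b) \<ge> norm (poly (lead_coeff Phi) x) * e ^ degree Phi"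
        using lead_coeff_fiber[OF lcx] degree_fiber[OF lcx] by (simp add: evalb_def)
      moreover have "norm (poly (lead_coeff Phi) x) * e ^ degree Phi \<ge> c * e ^ degree Phi"
        using elim ep by (intro mult_right_mono) auto
      ultimately show False using elim by simp
    qed
  qed
qed

lemma finite_eps:
  assumes "finite I" "\<forall>i\<in>I. \<exists>e>0. P i e"
    and mono: "\<And>i e e'. P i e \<Longrightarrow> 0 < e' \<Longrightarrow> e' \<le> e \<Longrightarrow> P i e'"
  shows "\<exists>e>(0::real). \<forall>i\<in>I. P i e"
  using assms(1,2)
proof (induction I rule: finite_induct)
  case empty then show ?case by (intro exI[of _ 1]) auto
next
  case (insert x F)
  then obtain e1 where e1: "e1 > 0" "\<forall>i\<in>F. P i e1" by auto
  obtain e2 where e2: "e2 > 0" "P x e2" using insert.prems by auto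
  show ?case
    by (intro exI[of _ "min e1 e2"]) (use e1 e2 mono in \<open>auto simp: min_def\<close>)
qed

locale setting =
  fixes Phi :: "complex poly poly" and d :: nat and V :: "'a set" and E :: "'a \<Rightarrow> 'a \<Rightarrow> bool"
  assumes std: "standard Phi" and sym: "symmetric_bipoly Phi" and deg: "partial_degree Phi = d"
    and fsg: "finite_simple_graph V E" and conn: "connected_graph V E" and reg: "regular_graph V E d"
    and strong: "strongly_phi_polynomial Phi V E"
begin

lemma Phi_nz: "Phi \<noteq> 0"
  using std unfolding standard_def by auto

lemma fiber_nz: "fiber Phi u \<noteq> 0"
proof
  assume f0: "fiber Phi u = 0"
  have "\<forall>i. [:-u,1:] dvd coeff Phi i"
  proof
    fix i
    have "poly (coeff Phi i) u = 0" using f0 fiber_coeff[of Phi u i] by simp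
    then show "[:-u,1:] dvd coeff Phi i" by (simp add: poly_eq_0_iff_dvd)
  qed
  then have "[:[:-u,1:]:] dvd Phi" by (simp add: const_poly_dvd_iff)
  then have "degree [:-u,1:] = 0" using std unfolding standard_def by blast
  then show False by simp
qed

lemma adj_sym: "phi_adj Phi u v \<longleftrightarrow> phi_adj Phi v u"
  using sym unfolding symmetric_bipoly_def phi_adj_def by metis

lemma nbr_finite: "finite {v. phi_adj Phi u v}"
  using poly_roots_finite[OF fiber_nz[of u]] by (simp add: phi_adj_def evalb_def)

lemma rtr_sym: "(phi_adj Phi)\<^sup>*\<^sup>* u v \<Longrightarrow> (phi_adj Phi)\<^sup>*\<^sup>* v u"
proof (induction rule: rtranclp_induct)
  case base then show ?case by simp
next
  case (step y z)
  then show ?case using adj_sym by (meson converse_rtranclp_into_rtranclp)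
qed

lemma comp_refl: "u \<in> component Phi u"
  by (simp add: component_def)

lemma comp_sym: "v \<in> component Phi u \<Longrightarrow> u \<in> component Phi v"
  by (simp add: component_def rtr_sym)

lemma comp_eq: "v \<in> component Phi u \<Longrightarrow> component Phi v = component Phi u"
  unfolding component_def using rtr_sym by (auto intro: rtranclp_trans)

lemma comp_closed: "v \<in> component Phi u \<Longrightarrow> phi_adj Phi v w \<Longrightarrow> w \<in> component Phi u"
  unfolding component_def by (auto intro: rtranclp.rtrancl_into_rtrancl)

definition reach :: "complex \<Rightarrow> nat \<Rightarrow> complex set" where
  "reach u n = ((\<lambda>S. \<Union>x\<in>S. {v. phi_adj Phi x v}) ^^ n) {u}"

lemma reach_finite: "finite (reach u n)"
  by (induction n) (auto simp: reach_def nbr_finite)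

lemma reach_cover: "(phi_adj Phi)\<^sup>*\<^sup>* u v \<Longrightarrow> \<exists>n. v \<in> reach u n"
proof (induction rule: rtranclp_induct)
  case base then show ?case by (intro exI[of _ 0]) (simp add: reach_def)
next
  case (step y z)
  then obtain n where "y \<in> reach u n" by blast
  then have "z \<in> reach u (Suc n)" using step(2) by (auto simp: reach_def)
  then show ?case by blast
qed

lemma comp_countable: "countable (component Phi u)"
proof -
  have "component Phi u \<subseteq> (\<Union>n. reach u n)"
    using reach_cover unfolding component_def by blast
  moreover have "countable (\<Union>n. reach u n)"
    by (intro countable_UN) (auto intro: countable_finite reach_finite)
  ultimately show ?thesis by (rule countable_subset)
qed

definition Lpoly :: "complex poly" where
  "Lpoly = (\<Sum>i\<le>degree Phi. coeff Phi i * [:0,1:] ^ i)"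

lemma poly_Lpoly: "poly Lpoly u = evalb Phi u u"
  by (simp add: Lpoly_def evalb_sum poly_sum)

lemma Lpoly_nz: "Lpoly \<noteq> 0"
proof -
  obtain u where "evalb Phi u u \<noteq> 0" using std unfolding standard_def by blast
  then show ?thesis using poly_Lpoly[of u] by auto
qed

lemma sing_finite: "finite {x. singular_vertex Phi x}"
proof -
  let ?R = "resultant Phi (pderiv Phi)"
  have R: "?R \<noteq> 0" using std squarefree_resultant_nonzero unfolding standard_def by blast
  have lc: "lead_coeff Phi \<noteq> 0" using Phi_nz by simp
  have "{x. singular_vertex Phi x} \<subseteq> {x. poly Lpoly x = 0} \<union> {x. poly (lead_coeff Phi) x = 0} \<union> {x. poly ?R x = 0}"
  proof
    fix x assume "x \<in> {x. singular_vertex Phi x}"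
    then have "evalb Phi x x = 0 \<or> (fiber Phi x \<noteq> 0 \<and> (\<exists>v. order v (fiber Phi x) \<ge> 2)) \<or> poly (lead_coeff Phi) x = 0"
      by (simp add: singular_vertex_def)
    then show "x \<in> {x. poly Lpoly x = 0} \<union> {x. poly (lead_coeff Phi) x = 0} \<union> {x. poly ?R x = 0}"
      using multiple_root_resultant[of Phi x] poly_Lpoly[of x] by auto
  qed
  moreover have "finite ({x. poly Lpoly x = 0} \<union> {x. poly (lead_coeff Phi) x = 0} \<union> {x. poly ?R x = 0})"
    using poly_roots_finite[OF Lpoly_nz] poly_roots_finite[OF lc] poly_roots_finite[OF R] by simp
  ultimately show ?thesis by (rule finite_subset)
qed

definition Bset :: "complex set" where
  "Bset = (\<Union>s\<in>{x. singular_vertex Phi x}. component Phi s)"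

lemma Bset_countable: "countable Bset"
  unfolding Bset_def using sing_finite comp_countable
  by (intro countable_UN) (auto intro: countable_finite)

lemma Gstar_char: "u \<in> Gstar_verts Phi \<longleftrightarrow> u \<notin> Bset"
proof
  assume "u \<in> Gstar_verts Phi"
  then obtain x where C: "u \<in> component Phi x" "\<forall>y\<in>component Phi x. \<not> singular_vertex Phi y"
    unfolding Gstar_verts_def Gstar_components_def by auto
  show "u \<notin> Bset"
  proof
    assume "u \<in> Bset"
    then obtain s where s: "singular_vertex Phi s" "u \<in> component Phi s" unfolding Bset_def by auto
    have "s \<in> component Phi u" using s(2) comp_sym by blast
    then have "s \<in> component Phi x" using comp_eq[OF C(1)] by simp
    with C(2) s(1) show False by blast
  qed
next
  assume u: "u \<notin> Bset"
  have "\<forall>y\<in>component Phi u. \<not> singular_vertex Phi y"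
  proof (intro ballI notI)
    fix y assume "y \<in> component Phi u" "singular_vertex Phi y"
    then have "u \<in> Bset" unfolding Bset_def using comp_sym by blast
    with u show False by blast
  qed
  then have "component Phi u \<in> Gstar_components Phi"
    unfolding Gstar_components_def by auto
  then show "u \<in> Gstar_verts Phi" unfolding Gstar_verts_def using comp_refl by blast
qed

lemma Gstar_eq: "Gstar_verts Phi = - Bset"
  using Gstar_char by auto

lemma Gstar_connected: "connected (Gstar_verts Phi)"
  unfolding Gstar_eq
  by (rule path_connected_imp_connected, rule path_connected_complement_countable) (auto simp: Bset_countable)

lemma Gstar_nonempty: "Gstar_verts Phi \<noteq> {}"
proof
  assume "Gstar_verts Phi = {}"
  then have "Bset = UNIV" unfolding Gstar_eq by auto
  then show False using Bset_countable uncountable_UNIV_complex by simp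
qed

lemma Gstar_comp: "u \<in> Gstar_verts Phi \<Longrightarrow> component Phi u \<in> Gstar_components Phi"
  unfolding Gstar_components_def using Gstar_char Bset_def comp_sym by blast

lemma Gstar_comp_sub: "u \<in> Gstar_verts Phi \<Longrightarrow> component Phi u \<subseteq> Gstar_verts Phi"
  using Gstar_comp comp_refl unfolding Gstar_verts_def by blast

lemma Gstar_nonsing: "u \<in> Gstar_verts Phi \<Longrightarrow> \<not> singular_vertex Phi u"
  using Gstar_comp comp_refl unfolding Gstar_components_def by blast

lemma Gstar_iso: "u \<in> Gstar_verts Phi \<Longrightarrow> graph_iso V E (component Phi u) (phi_adj Phi)"
  using Gstar_comp strong unfolding strongly_phi_polynomial_def by blast

end

context setting begin

lemma V_finite: "finite V" using fsg unfolding finite_simple_graph_def by blast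

lemma comp_nonsing_lc: "u0 \<in> Gstar_verts Phi \<Longrightarrow> x \<in> component Phi u0 \<Longrightarrow> poly (lead_coeff Phi) x \<noteq> 0"
  using Gstar_comp_sub Gstar_nonsing unfolding singular_vertex_def by blast

lemma transport_Q:
  assumes u0: "u0 \<in> Gstar_verts Phi" and bij: "bij_betw \<phi>0 V (component Phi u0)"
    and iso: "\<forall>x\<in>V. \<forall>y\<in>V. E x y \<longleftrightarrow> phi_adj Phi (\<phi>0 x) (\<phi>0 y)"
    and h0: "h0 \<in> V" "\<phi>0 h0 = u0" and h: "h \<in> V"
  shows "\<forall>e>0. eventually (\<lambda>w. \<exists>r\<in>component Phi w. dist r (\<phi>0 h) < e) (nhds u0)"
proof -
  have "(\<lambda>a b. a \<in> V \<and> b \<in> V \<and> E a b)\<^sup>*\<^sup>* h0 h"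
    using conn h0 h unfolding connected_graph_def by blast
  then show ?thesis
  proof (induction rule: rtranclp_induct)
    case base
    show ?case
    proof (intro allI impI)
      fix e :: real assume "e > 0"
      then have "eventually (\<lambda>w. dist w u0 < e) (nhds u0)"
        by (auto simp: eventually_nhds_metric)
      then show "eventually (\<lambda>w. \<exists>r\<in>component Phi w. dist r (\<phi>0 h0) < e) (nhds u0)"
        by eventually_elim (use h0 comp_refl in auto)
    qed
  next
    case (step y z)
    show ?case
    proof (intro allI impI)
      fix e :: real assume e: "e > 0"
      have yV: "y \<in> V" and zV: "z \<in> V" and Eyz: "E y z" using step by auto
      have "\<phi>0 y \<in> component Phi u0" using bij yV bij_betwE by blast
      then have lc: "poly (lead_coeff Phi) (\<phi>0 y) \<noteq> 0" using comp_nonsing_lc u0 by blast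
      have ev: "evalb Phi (\<phi>0 y) (\<phi>0 z) = 0" using iso yV zV Eyz unfolding phi_adj_def by blast
      from root_cont[OF lc ev e] obtain eta where eta: "eta > 0"
        "\<And>a'. dist a' (\<phi>0 y) < eta \<Longrightarrow> \<exists>r. evalb Phi a' r = 0 \<and> dist r (\<phi>0 z) < e"
        unfolding eventually_nhds_metric by blast
      have "eventually (\<lambda>w. \<exists>r\<in>component Phi w. dist r (\<phi>0 y) < eta) (nhds u0)"
        using step.IH eta(1) by blast
      then show "eventually (\<lambda>w. \<exists>r\<in>component Phi w. dist r (\<phi>0 z) < e) (nhds u0)"
      proof eventually_elim
        case (elim w)
        then obtain r where r: "r \<in> component Phi w" "dist r (\<phi>0 y) < eta" by blast
        then obtain r' where r': "evalb Phi r r' = 0" "dist r' (\<phi>0 z) < e" using eta(2) by blast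
        have "r' \<in> component Phi w" using comp_closed[OF r(1)] r'(1) unfolding phi_adj_def by blast
        then show ?case using r' by blast
      qed
    qed
  qed
qed

definition good :: "('a \<Rightarrow> complex) \<Rightarrow> complex \<Rightarrow> bool" where
  "good \<psi> w \<longleftrightarrow> bij_betw \<psi> V (component Phi w) \<and> (\<forall>x\<in>V. \<forall>y\<in>V. E x y \<longleftrightarrow> phi_adj Phi (\<psi> x) (\<psi> y))"

lemma Gstar_good: "w \<in> Gstar_verts Phi \<Longrightarrow> \<exists>\<psi>. good \<psi> w"
  using Gstar_iso unfolding graph_iso_def good_def by blast

lemma nbr_card:
  assumes w: "w \<in> Gstar_verts Phi" and v: "v \<in> component Phi w"
  shows "card {y. phi_adj Phi v y} = d"
proof -
  obtain \<phi> where g: "good \<phi> w" using Gstar_good[OF w] by blast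
  then have bij: "bij_betw \<phi> V (component Phi w)" and iso: "\<forall>x\<in>V. \<forall>y\<in>V. E x y \<longleftrightarrow> phi_adj Phi (\<phi> x) (\<phi> y)"
    unfolding good_def by auto
  obtain x where x: "x \<in> V" "\<phi> x = v" using bij v by (metis bij_betw_imp_surj_on imageE)
  have "{y. phi_adj Phi v y} = \<phi> ` {y\<in>V. E x y}"
  proof
    show "{y. phi_adj Phi v y} \<subseteq> \<phi> ` {y\<in>V. E x y}"
    proof
      fix y assume "y \<in> {y. phi_adj Phi v y}"
      then have a: "phi_adj Phi v y" by simp
      then have "y \<in> component Phi w" using comp_closed[OF v] by blast
      then obtain z where "z \<in> V" "\<phi> z = y" using bij by (metis bij_betw_imp_surj_on imageE)
      then show "y \<in> \<phi> ` {y\<in>V. E x y}" using iso x a by auto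
    qed
  next
    show "\<phi> ` {y\<in>V. E x y} \<subseteq> {y. phi_adj Phi v y}" using iso x by auto
  qed
  moreover have "inj_on \<phi> {y\<in>V. E x y}" using bij bij_betw_imp_inj_on by (metis (no_types, lifting) inj_on_subset mem_Collect_eq subsetI)
  ultimately have "card {y. phi_adj Phi v y} = card {y\<in>V. E x y}" by (simp add: card_image)
  also have "\<dots> = d" using reg x unfolding regular_graph_def by blast
  finally show ?thesis .
qed

lemma transport:
  assumes u0: "u0 \<in> Gstar_verts Phi" and g0: "good \<phi>0 u0" and h0: "h0 \<in> V" "\<phi>0 h0 = u0"
  shows "\<exists>\<delta>>0. \<forall>w\<in>Gstar_verts Phi. dist w u0 < \<delta> \<longrightarrow> (\<exists>\<psi>. good \<psi> w \<and> \<psi> h0 = w)"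
proof -
  have bij: "bij_betw \<phi>0 V (component Phi u0)" and iso: "\<forall>x\<in>V. \<forall>y\<in>V. E x y \<longleftrightarrow> phi_adj Phi (\<phi>0 x) (\<phi>0 y)"
    using g0 unfolding good_def by auto
  have inj0: "inj_on \<phi>0 V" using bij bij_betw_imp_inj_on by blast
  define P where "P = (\<lambda>(xy::'a \<times> 'a) (e::real).
     (fst xy \<noteq> snd xy \<longrightarrow> 2 * e \<le> dist (\<phi>0 (fst xy)) (\<phi>0 (snd xy))) \<and>
     (\<not> E (fst xy) (snd xy) \<longrightarrow> (\<forall>p q. dist p (\<phi>0 (fst xy)) < e \<longrightarrow> dist q (\<phi>0 (snd xy)) < e \<longrightarrow> evalb Phi p q \<noteq> 0)))"
  have "\<exists>e>0. \<forall>i\<in>V \<times> V. P i e"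
  proof (rule finite_eps)
    show "finite (V \<times> V)" using V_finite by simp
  next
    fix i e e' assume "P i e" "0 < e'" "e' \<le> e"
    then show "P i e'" unfolding P_def by (auto split: prod.splits)
  next
    show "\<forall>i\<in>V \<times> V. \<exists>e>0. P i e"
    proof
      fix i assume i: "i \<in> V \<times> V"
      obtain x y where xy: "i = (x, y)" "x \<in> V" "y \<in> V" using i by auto
      obtain e1 where e1: "e1 > 0" "x \<noteq> y \<longrightarrow> 2 * e1 \<le> dist (\<phi>0 x) (\<phi>0 y)"
      proof (cases "x = y")
        case True then show ?thesis using that[of 1] by auto
      next
        case False
        then have "\<phi>0 x \<noteq> \<phi>0 y" using inj0 xy inj_on_eq_iff by metis
        then show ?thesis using that[of "dist (\<phi>0 x) (\<phi>0 y) / 2"] by auto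
      qed
      obtain e2 where e2: "e2 > 0" "\<not> E x y \<longrightarrow> (\<forall>p q. dist p (\<phi>0 x) < e2 \<longrightarrow> dist q (\<phi>0 y) < e2 \<longrightarrow> evalb Phi p q \<noteq> 0)"
      proof (cases "E x y")
        case True then show ?thesis using that[of 1] by auto
      next
        case False
        then have "evalb Phi (\<phi>0 x) (\<phi>0 y) \<noteq> 0" using iso xy unfolding phi_adj_def by blast
        from nonedge_stable[OF this] obtain e where "e > 0" "\<forall>p q. dist p (\<phi>0 x) < e \<longrightarrow> dist q (\<phi>0 y) < e \<longrightarrow> evalb Phi p q \<noteq> 0" by blast
        then show ?thesis using that[of e] by blast
      qed
      show "\<exists>e>0. P i e"
        by (rule exI[of _ "min e1 e2"]) (use e1 e2 xy in \<open>auto simp: P_def\<close>)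
    qed
  qed
  then obtain e where e: "e > 0" "\<forall>i\<in>V \<times> V. P i e" by blast
  have sep: "\<And>x y. x \<in> V \<Longrightarrow> y \<in> V \<Longrightarrow> x \<noteq> y \<Longrightarrow> 2 * e \<le> dist (\<phi>0 x) (\<phi>0 y)"
    using e(2) unfolding P_def by fastforce
  have nonedge: "\<And>x y p q. x \<in> V \<Longrightarrow> y \<in> V \<Longrightarrow> \<not> E x y \<Longrightarrow> dist p (\<phi>0 x) < e \<Longrightarrow> dist q (\<phi>0 y) < e \<Longrightarrow> evalb Phi p q \<noteq> 0"
    using e(2) unfolding P_def by fastforce
  have "eventually (\<lambda>w. \<forall>h\<in>V. \<exists>r\<in>component Phi w. dist r (\<phi>0 h) < e) (nhds u0)"
    using transport_Q[OF u0 bij iso h0] e(1) V_finite by (simp add: eventually_ball_finite)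
  moreover have "eventually (\<lambda>w. dist w u0 < e) (nhds u0)"
    using e(1) by (auto simp: eventually_nhds_metric)
  ultimately have "eventually (\<lambda>w. (\<forall>h\<in>V. \<exists>r\<in>component Phi w. dist r (\<phi>0 h) < e) \<and> dist w u0 < e) (nhds u0)"
    by eventually_elim auto
  then obtain \<delta> where \<delta>: "\<delta> > 0" "\<And>w. dist w u0 < \<delta> \<Longrightarrow> (\<forall>h\<in>V. \<exists>r\<in>component Phi w. dist r (\<phi>0 h) < e) \<and> dist w u0 < e"
    unfolding eventually_nhds_metric by blast
  show ?thesis
  proof (intro exI[of _ \<delta>] conjI ballI impI)
    show "\<delta> > 0" by fact
  next
    fix w assume w: "w \<in> Gstar_verts Phi" "dist w u0 < \<delta>"
    note wd = \<delta>(2)[OF w(2)]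
    define \<psi> where "\<psi> = (\<lambda>h. if h = h0 then w else (SOME r. r \<in> component Phi w \<and> dist r (\<phi>0 h) < e))"
    have \<psi>: "\<psi> h \<in> component Phi w \<and> dist (\<psi> h) (\<phi>0 h) < e" if "h \<in> V" for h
    proof (cases "h = h0")
      case True then show ?thesis using wd h0 comp_refl by (simp add: \<psi>_def)
    next
      case False
      have "\<exists>r. r \<in> component Phi w \<and> dist r (\<phi>0 h) < e" using wd that by blast
      then have "(SOME r. r \<in> component Phi w \<and> dist r (\<phi>0 h) < e) \<in> component Phi w \<and> dist (SOME r. r \<in> component Phi w \<and> dist r (\<phi>0 h) < e) (\<phi>0 h) < e"
        by (rule someI_ex)
      then show ?thesis using False unfolding \<psi>_def by simp
    qed
    have inj: "inj_on \<psi> V"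
    proof (rule inj_onI, rule ccontr)
      fix x y assume xy: "x \<in> V" "y \<in> V" "\<psi> x = \<psi> y" "x \<noteq> y"
      have "dist (\<phi>0 x) (\<phi>0 y) \<le> dist (\<phi>0 x) (\<psi> x) + dist (\<psi> y) (\<phi>0 y)"
        using xy(3) by (metis dist_triangle)
      also have "\<dots> < 2 * e" using \<psi>[OF xy(1)] \<psi>[OF xy(2)] by (simp add: dist_commute)
      finally show False using sep[OF xy(1,2,4)] by simp
    qed
    obtain \<phi> where gw: "good \<phi> w" using Gstar_good[OF w(1)] by blast
    then have bijw: "bij_betw \<phi> V (component Phi w)" unfolding good_def by simp
    have fin: "finite (component Phi w)" using bijw V_finite bij_betw_finite by blast
    have cardw: "card (component Phi w) = card V" using bijw by (simp add: bij_betw_same_card)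
    have sub: "\<psi> ` V \<subseteq> component Phi w" using \<psi> by blast
    have "card (\<psi> ` V) = card V" using inj by (simp add: card_image)
    then have img: "\<psi> ` V = component Phi w" using card_subset_eq[OF fin sub] cardw by simp
    then have bijpsi: "bij_betw \<psi> V (component Phi w)" using inj by (simp add: bij_betw_def)
    have ne: "\<not> phi_adj Phi (\<psi> x) (\<psi> y)" if "x \<in> V" "y \<in> V" "\<not> E x y" for x y
      using nonedge[OF that] \<psi>[OF that(1)] \<psi>[OF that(2)] unfolding phi_adj_def by blast
    have ed: "phi_adj Phi (\<psi> x) (\<psi> y)" if "x \<in> V" "y \<in> V" "E x y" for x y
    proof -
      let ?N = "{v. phi_adj Phi (\<psi> x) v}"
      have "?N \<subseteq> \<psi> ` {z\<in>V. E x z}"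
      proof
        fix v assume "v \<in> ?N"
        then have a: "phi_adj Phi (\<psi> x) v" by simp
        have px: "\<psi> x \<in> component Phi w" using \<psi>[OF that(1)] by blast
        have "v \<in> component Phi w" by (rule comp_closed[OF px a])
        then have "v \<in> \<psi> ` V" by (simp only: img)
        then obtain z where z: "z \<in> V" "\<psi> z = v" by (rule imageE) auto
        then have "E x z" using ne[OF that(1) z(1)] a by metis
        then show "v \<in> \<psi> ` {z\<in>V. E x z}" using z by blast
      qed
      moreover have "card ?N = d" using nbr_card[OF w(1)] \<psi>[OF that(1)] by simp
      moreover have "card (\<psi> ` {z\<in>V. E x z}) = d"
      proof -
        have "inj_on \<psi> {z\<in>V. E x z}" using inj by (rule inj_on_subset) auto
        then have "card (\<psi> ` {z\<in>V. E x z}) = card {z\<in>V. E x z}" by (rule card_image)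
        also have "\<dots> = d" using reg that(1) unfolding regular_graph_def by blast
        finally show ?thesis .
      qed
      moreover have "finite (\<psi> ` {z\<in>V. E x z})" using V_finite by simp
      ultimately have "?N = \<psi> ` {z\<in>V. E x z}" by (metis card_subset_eq)
      then show ?thesis using that by blast
    qed
    have "good \<psi> w" unfolding good_def using bijpsi ne ed by blast
    moreover have "\<psi> h0 = w" by (simp add: \<psi>_def)
    ultimately show "\<exists>\<psi>. good \<psi> w \<and> \<psi> h0 = w" by blast
  qed
qed

end

context setting begin

definition Tset :: "'a \<Rightarrow> complex set" where
  "Tset h = {u \<in> Gstar_verts Phi. \<exists>\<psi>. good \<psi> u \<and> \<psi> h = u}"

definition aut :: "'a \<Rightarrow> 'a \<Rightarrow> bool" where
  "aut h h' \<longleftrightarrow> (\<exists>\<sigma>. bij_betw \<sigma> V V \<and> (\<forall>x\<in>V. \<forall>y\<in>V. E x y \<longleftrightarrow> E (\<sigma> x) (\<sigma> y)) \<and> \<sigma> h = h')"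

lemma T_open:
  assumes "u \<in> Tset h" "h \<in> V"
  shows "\<exists>\<delta>>0. \<forall>w\<in>Gstar_verts Phi. dist w u < \<delta> \<longrightarrow> w \<in> Tset h"
proof -
  obtain \<psi> where "u \<in> Gstar_verts Phi" "good \<psi> u" "\<psi> h = u" using assms unfolding Tset_def by blast
  from transport[OF this(1,2) assms(2) this(3)] show ?thesis unfolding Tset_def by blast
qed

lemma T_aut:
  assumes h: "h \<in> V" "h' \<in> V" and u: "u \<in> Tset h" "u \<in> Tset h'"
  shows "aut h h'"
proof -
  obtain \<psi> where \<psi>: "good \<psi> u" "\<psi> h = u" using u(1) unfolding Tset_def by blast
  obtain \<psi>2 where \<psi>2: "good \<psi>2 u" "\<psi>2 h' = u" using u(2) unfolding Tset_def by blast
  have b1: "bij_betw \<psi> V (component Phi u)" and i1: "\<forall>x\<in>V. \<forall>y\<in>V. E x y \<longleftrightarrow> phi_adj Phi (\<psi> x) (\<psi> y)"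
    using \<psi>(1) unfolding good_def by auto
  have b2: "bij_betw \<psi>2 V (component Phi u)" and i2: "\<forall>x\<in>V. \<forall>y\<in>V. E x y \<longleftrightarrow> phi_adj Phi (\<psi>2 x) (\<psi>2 y)"
    using \<psi>2(1) unfolding good_def by auto
  define \<sigma> where "\<sigma> = inv_into V \<psi>2 \<circ> \<psi>"
  have bs: "bij_betw \<sigma> V V" unfolding \<sigma>_def
    using bij_betw_trans[OF b1 bij_betw_inv_into[OF b2]] .
  have bk: "\<psi>2 (\<sigma> x) = \<psi> x" if "x \<in> V" for x
    unfolding \<sigma>_def using that b1 b2
    by (simp add: bij_betw_imp_surj_on bij_betwE f_inv_into_f)
  have sV: "\<sigma> x \<in> V" if "x \<in> V" for x using bs that bij_betwE by blast
  have iso: "\<forall>x\<in>V. \<forall>y\<in>V. E x y \<longleftrightarrow> E (\<sigma> x) (\<sigma> y)"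
    using i1 i2 bk sV by metis
  have "inv_into V \<psi>2 u = h'" using \<psi>2(2) b2 h(2) by (metis bij_betw_imp_inj_on inv_into_f_f)
  then have "\<sigma> h = h'" unfolding \<sigma>_def using \<psi>(2) by simp
  then show ?thesis unfolding aut_def using bs iso by blast
qed

lemma T_aut_mem:
  assumes "u \<in> Tset h'" "aut h h'"
  shows "u \<in> Tset h"
proof -
  obtain \<psi> where u: "u \<in> Gstar_verts Phi" and \<psi>: "good \<psi> u" "\<psi> h' = u" using assms(1) unfolding Tset_def by blast
  obtain \<sigma> where \<sigma>: "bij_betw \<sigma> V V" "\<forall>x\<in>V. \<forall>y\<in>V. E x y \<longleftrightarrow> E (\<sigma> x) (\<sigma> y)" "\<sigma> h = h'"
    using assms(2) unfolding aut_def by blast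
  have b1: "bij_betw \<psi> V (component Phi u)" and i1: "\<forall>x\<in>V. \<forall>y\<in>V. E x y \<longleftrightarrow> phi_adj Phi (\<psi> x) (\<psi> y)"
    using \<psi>(1) unfolding good_def by auto
  have "bij_betw (\<psi> \<circ> \<sigma>) V (component Phi u)" by (rule bij_betw_trans[OF \<sigma>(1) b1])
  moreover have "\<forall>x\<in>V. \<forall>y\<in>V. E x y \<longleftrightarrow> phi_adj Phi ((\<psi> \<circ> \<sigma>) x) ((\<psi> \<circ> \<sigma>) y)"
    using \<sigma>(1,2) i1 by (simp add: bij_betwE)
  ultimately have "good (\<psi> \<circ> \<sigma>) u" unfolding good_def by blast
  then show ?thesis unfolding Tset_def using u \<psi>(2) \<sigma>(3) by auto
qed

lemma T_nonempty:
  assumes "h \<in> V" shows "Tset h \<noteq> {}"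
proof -
  obtain u where u: "u \<in> Gstar_verts Phi" using Gstar_nonempty by blast
  obtain \<phi> where g: "good \<phi> u" using Gstar_good[OF u] by blast
  then have b: "bij_betw \<phi> V (component Phi u)" unfolding good_def by simp
  then have v: "\<phi> h \<in> component Phi u" using assms bij_betwE by blast
  then have ce: "component Phi (\<phi> h) = component Phi u" by (rule comp_eq)
  have "good \<phi> (\<phi> h)" using g ce unfolding good_def by simp
  moreover have "\<phi> h \<in> Gstar_verts Phi" using Gstar_comp_sub[OF u] v by blast
  ultimately show ?thesis unfolding Tset_def by blast
qed

lemma T_all:
  assumes h: "h \<in> V" shows "Tset h = Gstar_verts Phi"
proof -
  let ?S = "Gstar_verts Phi"
  have sub: "Tset h \<subseteq> ?S" unfolding Tset_def by blast
  have op: "openin (top_of_set ?S) (Tset h)"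
    unfolding openin_euclidean_subtopology_iff
    using sub T_open[OF _ h] by (metis dist_commute)
  have op2: "openin (top_of_set ?S) (?S - Tset h)"
    unfolding openin_euclidean_subtopology_iff
  proof (intro conjI ballI)
    show "?S - Tset h \<subseteq> ?S" by blast
  next
    fix u assume u: "u \<in> ?S - Tset h"
    obtain \<phi> where g: "good \<phi> u" using Gstar_good u by blast
    then have b: "bij_betw \<phi> V (component Phi u)" unfolding good_def by simp
    define h' where "h' = inv_into V \<phi> u"
    have h'V: "h' \<in> V" unfolding h'_def using b comp_refl
      by (metis bij_betw_def inv_into_into)
    have "\<phi> h' = u" unfolding h'_def using b comp_refl
      by (metis bij_betw_def f_inv_into_f)
    then have uT: "u \<in> Tset h'" unfolding Tset_def using u g by blast
    obtain \<delta> where \<delta>: "\<delta> > 0" "\<forall>w\<in>?S. dist w u < \<delta> \<longrightarrow> w \<in> Tset h'"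
      using T_open[OF uT h'V] by blast
    show "\<exists>e>0. \<forall>x'\<in>?S. dist x' u < e \<longrightarrow> x' \<in> ?S - Tset h"
    proof (intro exI[of _ \<delta>] conjI ballI impI)
      fix w assume w: "w \<in> ?S" "dist w u < \<delta>"
      have wT: "w \<in> Tset h'" using \<delta>(2) w by blast
      have "w \<notin> Tset h"
      proof
        assume "w \<in> Tset h"
        then have "aut h h'" using T_aut[OF h h'V] wT by blast
        then have "u \<in> Tset h" using T_aut_mem uT by blast
        with u show False by blast
      qed
      then show "w \<in> ?S - Tset h" using w by blast
    qed (use \<delta> in blast)
  qed
  have cl: "closedin (top_of_set ?S) (Tset h)"
    using op2 sub by (simp add: closedin_def)
  have "Tset h = {} \<or> Tset h = ?S"
    using Gstar_connected op cl unfolding connected_clopen by blast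
  then show ?thesis using T_nonempty[OF h] by blast
qed

lemma H_vt: "vertex_transitive V E"
  unfolding vertex_transitive_def
proof (intro ballI)
  fix a b assume ab: "a \<in> V" "b \<in> V"
  obtain u where u: "u \<in> Gstar_verts Phi" using Gstar_nonempty by blast
  have "u \<in> Tset a" "u \<in> Tset b" using T_all ab u by auto
  then have "aut a b" using T_aut ab by blast
  then show "\<exists>f. bij_betw f V V \<and> (\<forall>x\<in>V. \<forall>y\<in>V. E x y \<longleftrightarrow> E (f x) (f y)) \<and> f a = b"
    unfolding aut_def by blast
qed

end

context setting begin

lemma comp_adj_in: "x \<in> component Phi u \<Longrightarrow> phi_adj Phi x y \<Longrightarrow> y \<in> component Phi u"
  by (rule comp_closed)

lemma comp_adj_in2: "y \<in> component Phi u \<Longrightarrow> phi_adj Phi x y \<Longrightarrow> x \<in> component Phi u"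
  using comp_closed adj_sym by blast

lemma extend_iso:
  assumes u: "u \<in> Gstar_verts Phi" and v: "v \<in> Gstar_verts Phi"
    and g: "bij_betw g (component Phi u) (component Phi v)"
    and gi: "\<forall>x\<in>component Phi u. \<forall>y\<in>component Phi u. phi_adj Phi x y \<longleftrightarrow> phi_adj Phi (g x) (g y)"
    and gu: "g u = v"
  shows "\<exists>f. bij_betw f (Gstar_verts Phi) (Gstar_verts Phi) \<and>
     (\<forall>x\<in>Gstar_verts Phi. \<forall>y\<in>Gstar_verts Phi. phi_adj Phi x y \<longleftrightarrow> phi_adj Phi (f x) (f y)) \<and> f u = v"
proof -
  let ?S = "Gstar_verts Phi"
  define C1 where "C1 = component Phi u"
  define C2 where "C2 = component Phi v"
  define gi' where "gi' = inv_into C1 g"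
  have gC: "bij_betw g C1 C2" using g unfolding C1_def C2_def .
  have giC: "bij_betw gi' C2 C1" unfolding gi'_def using gC by (rule bij_betw_inv_into)
  have g1: "x \<in> C1 \<Longrightarrow> g x \<in> C2" for x using gC bij_betwE by blast
  have g2: "x \<in> C2 \<Longrightarrow> gi' x \<in> C1" for x using giC bij_betwE by blast
  have g3: "x \<in> C2 \<Longrightarrow> g (gi' x) = x" for x unfolding gi'_def using gC
    by (metis bij_betw_def f_inv_into_f)
  have g4: "x \<in> C1 \<Longrightarrow> gi' (g x) = x" for x unfolding gi'_def using gC
    by (metis bij_betw_def inv_into_f_f)
  have iso1: "x \<in> C1 \<Longrightarrow> y \<in> C1 \<Longrightarrow> phi_adj Phi x y \<longleftrightarrow> phi_adj Phi (g x) (g y)" for x y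
    using gi unfolding C1_def by blast
  have iso2: "x \<in> C2 \<Longrightarrow> y \<in> C2 \<Longrightarrow> phi_adj Phi x y \<longleftrightarrow> phi_adj Phi (gi' x) (gi' y)" for x y
    using iso1[OF g2 g2] g3 by metis
  have S1: "C1 \<subseteq> ?S" unfolding C1_def using Gstar_comp_sub u by blast
  have S2: "C2 \<subseteq> ?S" unfolding C2_def using Gstar_comp_sub v by blast
  have cl1: "x \<in> C1 \<Longrightarrow> phi_adj Phi x y \<Longrightarrow> y \<in> C1" "y \<in> C1 \<Longrightarrow> phi_adj Phi x y \<Longrightarrow> x \<in> C1" for x y
    unfolding C1_def using comp_adj_in comp_adj_in2 by blast+
  have cl2: "x \<in> C2 \<Longrightarrow> phi_adj Phi x y \<Longrightarrow> y \<in> C2" "y \<in> C2 \<Longrightarrow> phi_adj Phi x y \<Longrightarrow> x \<in> C2" for x y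
    unfolding C2_def using comp_adj_in comp_adj_in2 by blast+
  have n1: "\<not> phi_adj Phi z y \<and> \<not> phi_adj Phi y z" if "z \<in> C1" "y \<notin> C1" for z y
    using cl1 that by blast
  have n2: "\<not> phi_adj Phi z y \<and> \<not> phi_adj Phi y z" if "z \<in> C2" "y \<notin> C2" for z y
    using cl2 that by blast
  have cases: "C1 = C2 \<or> C1 \<inter> C2 = {}"
  proof (cases "C1 \<inter> C2 = {}")
    case False
    then obtain z where "z \<in> C1" "z \<in> C2" by blast
    then have "C1 = C2" unfolding C1_def C2_def using comp_eq by metis
    then show ?thesis by blast
  qed simp
  define f where "f = (\<lambda>x. if x \<in> C1 then g x else if x \<in> C2 then gi' x else x)"
  define f' where "f' = (\<lambda>x. if x \<in> C2 then gi' x else if x \<in> C1 then g x else x)"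
  have fS: "f x \<in> ?S" if "x \<in> ?S" for x unfolding f_def using that g1 g2 S1 S2 by auto
  have f'S: "f' x \<in> ?S" if "x \<in> ?S" for x unfolding f'_def using that g1 g2 S1 S2 by auto
  have ff': "f (f' x) = x" for x
    using cases unfolding f_def f'_def
    by (auto simp: g3 g4 dest: g1 g2)
  have f'f: "f' (f x) = x" for x
    using cases unfolding f_def f'_def
    by (auto simp: g3 g4 dest: g1 g2)
  have bij: "bij_betw f ?S ?S"
    by (rule bij_betwI[of f ?S ?S f']) (use fS f'S ff' f'f in auto)
  have adj: "phi_adj Phi x y \<longleftrightarrow> phi_adj Phi (f x) (f y)" if "x \<in> ?S" "y \<in> ?S" for x y
  proof (cases "C1 = C2")
    case True
    have fx: "f z = (if z \<in> C1 then g z else z)" for z using True unfolding f_def by auto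
    have g1': "z \<in> C1 \<Longrightarrow> g z \<in> C1" for z using g1 True by blast
    show ?thesis
    proof (cases "x \<in> C1"; cases "y \<in> C1")
      assume "x \<in> C1" "y \<in> C1" then show ?thesis by (simp add: fx iso1)
    next
      assume a: "x \<in> C1" "y \<notin> C1"
      then show ?thesis using n1[OF a] n1[OF g1'[OF a(1)] a(2)] by (simp add: fx)
    next
      assume a: "x \<notin> C1" "y \<in> C1"
      then show ?thesis using n1[OF a(2,1)] n1[OF g1'[OF a(2)] a(1)] by (simp add: fx)
    next
      assume a: "x \<notin> C1" "y \<notin> C1"
      then show ?thesis by (simp add: fx)
    qed
  next
    case False
    then have dj: "C1 \<inter> C2 = {}" using cases by blast
    have nc: "z \<in> C2 \<Longrightarrow> z \<notin> C1" "z \<in> C1 \<Longrightarrow> z \<notin> C2" for z using dj by blast+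
    have gg: "z \<in> C1 \<Longrightarrow> g z \<notin> C1" "z \<in> C2 \<Longrightarrow> gi' z \<notin> C2" for z using nc g1 g2 by blast+
    show ?thesis unfolding f_def
      using dj
      by (cases "x \<in> C1"; cases "y \<in> C1"; cases "x \<in> C2"; cases "y \<in> C2")
         (auto simp: iso1 iso2 dest: g1 g2 n1 n2 gg)
  qed
  have "f u = v" unfolding f_def using gu comp_refl[of u] unfolding C1_def by simp
  then show ?thesis using bij adj by blast
qed

lemma G_vt: "vertex_transitive (Gstar_verts Phi) (phi_adj Phi)"
  unfolding vertex_transitive_def
proof (intro ballI)
  fix u v assume u: "u \<in> Gstar_verts Phi" and v: "v \<in> Gstar_verts Phi"
  obtain \<phi>u where gu: "good \<phi>u u" using Gstar_good[OF u] by blast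
  obtain \<phi>v where gv: "good \<phi>v v" using Gstar_good[OF v] by blast
  have bu: "bij_betw \<phi>u V (component Phi u)" and iu: "\<forall>x\<in>V. \<forall>y\<in>V. E x y \<longleftrightarrow> phi_adj Phi (\<phi>u x) (\<phi>u y)"
    using gu unfolding good_def by auto
  have bv: "bij_betw \<phi>v V (component Phi v)" and iv: "\<forall>x\<in>V. \<forall>y\<in>V. E x y \<longleftrightarrow> phi_adj Phi (\<phi>v x) (\<phi>v y)"
    using gv unfolding good_def by auto
  define a where "a = inv_into V \<phi>u u"
  define b where "b = inv_into V \<phi>v v"
  have aV: "a \<in> V" unfolding a_def using bu comp_refl by (metis bij_betw_def inv_into_into)
  have bV: "b \<in> V" unfolding b_def using bv comp_refl by (metis bij_betw_def inv_into_into)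
  have pa: "\<phi>u a = u" unfolding a_def using bu comp_refl by (metis bij_betw_def f_inv_into_f)
  have pb: "\<phi>v b = v" unfolding b_def using bv comp_refl by (metis bij_betw_def f_inv_into_f)
  obtain \<sigma> where \<sigma>: "bij_betw \<sigma> V V" "\<forall>x\<in>V. \<forall>y\<in>V. E x y \<longleftrightarrow> E (\<sigma> x) (\<sigma> y)" "\<sigma> a = b"
    using H_vt aV bV unfolding vertex_transitive_def by blast
  define g where "g = \<phi>v \<circ> \<sigma> \<circ> inv_into V \<phi>u"
  have ib: "bij_betw (inv_into V \<phi>u) (component Phi u) V" using bu by (rule bij_betw_inv_into)
  have gb: "bij_betw g (component Phi u) (component Phi v)"
    unfolding g_def using bij_betw_trans[OF bij_betw_trans[OF ib \<sigma>(1)] bv] by (simp add: comp_assoc)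
  have gi: "\<forall>x\<in>component Phi u. \<forall>y\<in>component Phi u. phi_adj Phi x y \<longleftrightarrow> phi_adj Phi (g x) (g y)"
  proof (intro ballI)
    fix x y assume x: "x \<in> component Phi u" and y: "y \<in> component Phi u"
    let ?x = "inv_into V \<phi>u x" and ?y = "inv_into V \<phi>u y"
    have xV: "?x \<in> V" "?y \<in> V" using ib x y bij_betwE by blast+
    have ex: "\<phi>u ?x = x" "\<phi>u ?y = y" using bu x y by (metis bij_betw_def f_inv_into_f)+
    have sV: "\<sigma> ?x \<in> V" "\<sigma> ?y \<in> V" using \<sigma>(1) xV bij_betwE by blast+
    have "phi_adj Phi x y \<longleftrightarrow> E ?x ?y" using iu xV ex by metis
    also have "\<dots> \<longleftrightarrow> E (\<sigma> ?x) (\<sigma> ?y)" using \<sigma>(2) xV by blast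
    also have "\<dots> \<longleftrightarrow> phi_adj Phi (g x) (g y)" using iv sV unfolding g_def by simp
    finally show "phi_adj Phi x y \<longleftrightarrow> phi_adj Phi (g x) (g y)" .
  qed
  have "g u = v" unfolding g_def using \<sigma>(3) pb by (simp add: a_def[symmetric])
  from extend_iso[OF u v gb gi this]
  show "\<exists>f. bij_betw f (Gstar_verts Phi) (Gstar_verts Phi) \<and>
     (\<forall>x\<in>Gstar_verts Phi. \<forall>y\<in>Gstar_verts Phi. phi_adj Phi x y \<longleftrightarrow> phi_adj Phi (f x) (f y)) \<and> f u = v" .
qed

end

theorem mainTheorem6:
  fixes Phi :: "complex poly poly" and d :: nat
    and V :: "'a set" and E :: "'a \<Rightarrow> 'a \<Rightarrow> bool"
  assumes "standard Phi"
    and "symmetric_bipoly Phi"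
    and "partial_degree Phi = d"
    and "finite_simple_graph V E"
    and "connected_graph V E"
    and "regular_graph V E d"
    and "strongly_phi_polynomial Phi V E"
  shows "vertex_transitive (Gstar_verts Phi) (phi_adj Phi) \<and> vertex_transitive V E"
proof -
  interpret setting Phi d V E using assms by (unfold_locales)
  show ?thesis using G_vt H_vt by blast
qed

end
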